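(* Let $a,b,c$ be positive integers and let $G$ be a graph whose rank cardinality vector is $(a,b,c,1)$. Then some vertex of corner rank 3 or 4 is adjacent to every vertex of corner rank 2.
   Context: All graphs are finite, nonempty, and reflexive (every vertex has a loop). $N[v]$ is the closed neighborhood of $v$ (including $v$). For distinct $v,w$, $w$ strictly corners $v$ if $N[v]\subsetneq N[w]$; $v$ is then a strict corner. Corner ranking: set $G^{(1)}=G$, $k=1$. If $G^{(k)}$ is a clique, give all its vertices rank $k$ and stop. Else if $G^{(k)}$ has no strict corners, give all its vertices rank $\infty$ and stop. Else give every strict corner of $G^{(k)}$ rank $k$, delete them to get $G^{(k+1)}$ (induced subgraph), increase $k$ and repeat. The corner rank is the largest rank of a vertex; $X_k$ is the set of rank-$k$ vertices. The rank cardinality vector of a graph of finite corner rank $\alpha$ is $(x_\alpha,\dots,x_1)$ with $x_k=|X_k|$. *)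

theory Defs
  imports Main
begin

definition refl_graph :: "'a set \<Rightarrow> ('a \<Rightarrow> 'a \<Rightarrow> bool) \<Rightarrow> bool" where
  "refl_graph V E \<longleftrightarrow> finite V \<and> V \<noteq> {} \<and> (\<forall>v\<in>V. E v v) \<and>
     (\<forall>v\<in>V. \<forall>w\<in>V. E v w \<longleftrightarrow> E w v)"

definition cnbhd :: "('a \<Rightarrow> 'a \<Rightarrow> bool) \<Rightarrow> 'a set \<Rightarrow> 'a \<Rightarrow> 'a set" where
  "cnbhd E S v = {w \<in> S. E v w}"

definition strict_corners :: "('a \<Rightarrow> 'a \<Rightarrow> bool) \<Rightarrow> 'a set \<Rightarrow> 'a set" where
  "strict_corners E S = {v \<in> S. \<exists>w\<in>S. w \<noteq> v \<and> cnbhd E S v \<subset> cnbhd E S w}"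

definition is_clique :: "('a \<Rightarrow> 'a \<Rightarrow> bool) \<Rightarrow> 'a set \<Rightarrow> bool" where
  "is_clique E S \<longleftrightarrow> (\<forall>v\<in>S. \<forall>w\<in>S. E v w)"

text \<open>stage0 E V k is the vertex set of G^(k+1).\<close>
primrec stage0 :: "('a \<Rightarrow> 'a \<Rightarrow> bool) \<Rightarrow> 'a set \<Rightarrow> nat \<Rightarrow> 'a set" where
  "stage0 E V 0 = V"
| "stage0 E V (Suc k) = stage0 E V k - strict_corners E (stage0 E V k)"

text \<open>Vertex set of G^(k), for k \<ge> 1.\<close>
definition Gk :: "('a \<Rightarrow> 'a \<Rightarrow> bool) \<Rightarrow> 'a set \<Rightarrow> nat \<Rightarrow> 'a set" where
  "Gk E V k = stage0 E V (k - 1)"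

definition has_corner_rank :: "'a set \<Rightarrow> ('a \<Rightarrow> 'a \<Rightarrow> bool) \<Rightarrow> nat \<Rightarrow> bool" where
  "has_corner_rank V E \<alpha> \<longleftrightarrow> 1 \<le> \<alpha> \<and> is_clique E (Gk E V \<alpha>) \<and>
     (\<forall>k. 1 \<le> k \<and> k < \<alpha> \<longrightarrow> \<not> is_clique E (Gk E V k) \<and> strict_corners E (Gk E V k) \<noteq> {})"

definition rank_set :: "'a set \<Rightarrow> ('a \<Rightarrow> 'a \<Rightarrow> bool) \<Rightarrow> nat \<Rightarrow> nat \<Rightarrow> 'a set" where
  "rank_set V E \<alpha> k = (if k = \<alpha> then Gk E V \<alpha> else strict_corners E (Gk E V k))"

definition rank_card_vector :: "'a set \<Rightarrow> ('a \<Rightarrow> 'a \<Rightarrow> bool) \<Rightarrow> nat \<Rightarrow> nat list" where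
  "rank_card_vector V E \<alpha> = map (\<lambda>k. card (rank_set V E \<alpha> k)) (rev [1..<\<alpha>+1])"

end

theory Submission
  imports Defs
begin

theorem lemma3p23:
  fixes V :: "'a set" and E :: "'a \<Rightarrow> 'a \<Rightarrow> bool" and \<alpha> a b c :: nat
  assumes "refl_graph V E"
    and "has_corner_rank V E \<alpha>"
    and "rank_card_vector V E \<alpha> = [a, b, c, 1]"
    and "0 < a" and "0 < b" and "0 < c"
  shows "\<exists>v \<in> rank_set V E \<alpha> 3 \<union> rank_set V E \<alpha> 4.
           \<forall>w \<in> rank_set V E \<alpha> 2. E v w"
proof -
  have sym: "\<And>v w. v \<in> V \<Longrightarrow> w \<in> V \<Longrightarrow> E v w = E w v"
    using assms(1) unfolding refl_graph_def by blast
  have "length (rank_card_vector V E \<alpha>) = \<alpha>" unfolding rank_card_vector_def by simp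
  hence a4: "\<alpha> = 4" using assms(3) by simp
  have "rank_card_vector V E \<alpha> =
     [card (rank_set V E \<alpha> 4), card (rank_set V E \<alpha> 3), card (rank_set V E \<alpha> 2), card (rank_set V E \<alpha> 1)]"
    unfolding rank_card_vector_def a4 by (simp add: upt_rec numeral_eq_Suc)
  hence "card (strict_corners E V) = 1" using assms(3) a4
    by (simp add: rank_set_def Gk_def)
  then obtain u where u: "strict_corners E V = {u}" by (meson card_1_singletonE)
  define G2 where "G2 = V - {u}"
  define X2 where "X2 = strict_corners E G2"
  define G3 where "G3 = G2 - X2"
  have R2: "rank_set V E \<alpha> 2 = X2"
    by (simp add: rank_set_def a4 Gk_def X2_def G2_def u numeral_2_eq_2)
  have R34: "rank_set V E \<alpha> 3 \<union> rank_set V E \<alpha> 4 = G3"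
  proof -
    have s2: "stage0 E V 2 = G3" by (simp add: numeral_2_eq_2 G3_def X2_def G2_def u)
    have s3: "stage0 E V 3 = G3 - strict_corners E G3"
      using s2 by (simp add: numeral_3_eq_3 numeral_2_eq_2)
    show ?thesis unfolding rank_set_def a4 Gk_def using s2 s3
      by (auto simp: strict_corners_def)
  qed
  have uV: "u \<in> V" using u unfolding strict_corners_def by blast
  have cnV: "\<And>x. cnbhd E V x = cnbhd E G2 x \<union> (if E x u then {u} else {})"
    unfolding cnbhd_def G2_def using uV by auto
  have uG2: "u \<notin> G2" unfolding G2_def by simp
  have L: "E x u \<and> \<not> E y u" if xy: "x \<in> G2" "y \<in> G2" "x \<noteq> y"
    "cnbhd E G2 x \<subset> cnbhd E G2 y" for x y
  proof -
    have xV: "x \<in> V" "y \<in> V" "x \<noteq> u" using xy unfolding G2_def by auto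
    have sub: "cnbhd E G2 x \<subseteq> G2" "cnbhd E G2 y \<subseteq> G2" unfolding cnbhd_def by auto
    have "\<not> (cnbhd E V x \<subset> cnbhd E V y)"
    proof
      assume "cnbhd E V x \<subset> cnbhd E V y"
      hence "x \<in> strict_corners E V" using xV xy(3) unfolding strict_corners_def by (metis (mono_tags, lifting) mem_Collect_eq)
      thus False using u xV by simp
    qed
    thus ?thesis using cnV[of x] cnV[of y] xy(4) sub uG2 by (auto split: if_splits)
  qed
  have X2u: "E x u" if "x \<in> X2" for x
    using that L unfolding X2_def strict_corners_def by blast
  have X2G2: "X2 \<subseteq> G2" unfolding X2_def strict_corners_def by blast
  obtain w where w: "w \<in> V" "w \<noteq> u" "cnbhd E V u \<subset> cnbhd E V w"
    using u unfolding strict_corners_def by blast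
  have wG2: "w \<in> G2" using w unfolding G2_def by simp
  have wX: "E w x" if "x \<in> X2" for x
  proof -
    have xV: "x \<in> V" using that X2G2 G2_def by auto
    have "E u x" using X2u[OF that] sym[OF xV uV] by simp
    hence "x \<in> cnbhd E V u" using xV unfolding cnbhd_def by simp
    thus ?thesis using w(3) unfolding cnbhd_def by auto
  qed
  show ?thesis
  proof (cases "w \<in> G3")
    case True
    thus ?thesis using R2 R34 wX by auto
  next
    case False
    hence "w \<in> X2" using wG2 G3_def by simp
    then obtain y where y: "y \<in> G2" "y \<noteq> w" "cnbhd E G2 w \<subset> cnbhd E G2 y"
      unfolding X2_def strict_corners_def by blast
    have "\<not> E y u" using L[OF wG2 y(1) y(2)[symmetric] y(3)] by simp
    hence yG3: "y \<in> G3" using y(1) X2u G3_def by auto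
    have "E y x" if "x \<in> X2" for x
    proof -
      have "x \<in> cnbhd E G2 w" using wX[OF that] that X2G2 unfolding cnbhd_def by auto
      thus ?thesis using y(3) unfolding cnbhd_def by auto
    qed
    thus ?thesis using yG3 R2 R34 by auto
  qed
qed

end
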